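(* There is an RB-function $f_{scc}$ with the following property: for every conservative $d$-dim Petri net $A$, every bottom SCC $X$ of $A$, and every $I\subseteq[1,d]$, writing $G=G_{(X,I)}=(Q,A,E)$ and $J=[1,d]\setminus I$, if there is $x\in X$ with $x(j)\geq f_{scc}(\|G\|,d)$ for all $j\in J$, then $G$ is proper.
   Context: A $d$-dim Petri net $A$ is a finite set of actions $(a_-,a_+)\in\mathbb{N}^d\times\mathbb{N}^d$; $\|A\|$ is the maximum of all entries of all $a_-,a_+$. Steps $x\xrightarrow{a}y$ iff $x=c+a_-$, $y=c+a_+$ for some $c\in\mathbb{N}^d$; $\xrightarrow{*}$ is the reflexive-transitive closure. $A$ is conservative if some $w\in(\mathbb{N}_+)^d$ has $\langle a_+-a_-,w\rangle=0$ for all actions. A bottom SCC of a net is a nonempty set $X$ of configurations with $\{y\mid x\xrightarrow{*}y\}=X$ for all $x\in X$. For $I\subseteq[1,d]$ and $x\in\mathbb{Z}^d$, $x|_I$ is the restriction to components in $I$; $X|_I=\{x|_I\mid x\in X\}$; $A|_I$ is the $|I|$-dim net with actions $((a_-)|_I,(a_+)|_I)$. The Petri net with states $G_{(X,I)}=(Q,A,E)$ has state set $Q=X|_I$ and edges $E=\{(p,a,q)\in Q\times A\times Q\mid p\xrightarrow{a}q\text{ in }A|_I\}$; $\|G\|=\max\{\|Q\|,\|A\|\}$ where $\|Q\|$ is the maximal component of elements of $Q$. $G$ is proper if $Q$ is a bottom SCC of the net $A|_I$. A function $f:\mathbb{N}^2\to\mathbb{N}$ is an RB-function if there are $c\in\mathbb{N}$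 and a polynomial $p$ with $f(m,d)\leq(c+m)^{2^{p(d)}}$ for all $m,d$. *)

theory Defs
  imports "HOL-Computational_Algebra.Polynomial"
begin

text \<open>Components are indexed by naturals; the index set [1,d] of the paper
is rendered as {0..<d}. A vector in N^S (S a finite index set) is a function
nat => nat vanishing outside S. An action is a pair (a_minus, a_plus) of such vectors.\<close>

type_synonym vec = "nat \<Rightarrow> nat"
type_synonym action = "vec \<times> vec"

definition configs :: "nat set \<Rightarrow> vec set" where
  "configs S = {x. \<forall>i. i \<notin> S \<longrightarrow> x i = 0}"

definition petri_net :: "nat \<Rightarrow> action set \<Rightarrow> bool" where
  "petri_net d A \<longleftrightarrow> finite A \<and>
     (\<forall>(am, ap)\<in>A. am \<in> configs {..<d} \<and> ap \<in> configs {..<d})"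

definition step :: "action set \<Rightarrow> vec \<Rightarrow> vec \<Rightarrow> bool" where
  "step A x y \<longleftrightarrow> (\<exists>(am, ap)\<in>A. \<exists>c. x = (\<lambda>i. c i + am i) \<and> y = (\<lambda>i. c i + ap i))"

definition reach :: "action set \<Rightarrow> vec \<Rightarrow> vec \<Rightarrow> bool" where
  "reach A = (step A)\<^sup>*\<^sup>*"

definition conservative :: "nat \<Rightarrow> action set \<Rightarrow> bool" where
  "conservative d A \<longleftrightarrow> (\<exists>w::nat \<Rightarrow> nat. (\<forall>i<d. w i > 0) \<and>
     (\<forall>(am, ap)\<in>A. (\<Sum>i<d. (int (ap i) - int (am i)) * int (w i)) = 0))"

definition bottom_scc :: "vec set \<Rightarrow> action set \<Rightarrow> vec set \<Rightarrow> bool" where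
  "bottom_scc C A X \<longleftrightarrow> X \<noteq> {} \<and> X \<subseteq> C \<and>
     (\<forall>x\<in>X. {y \<in> C. reach A x y} = X)"

definition restr :: "nat set \<Rightarrow> vec \<Rightarrow> vec" where
  "restr I x = (\<lambda>i. if i \<in> I then x i else 0)"

definition restrict_net :: "nat set \<Rightarrow> action set \<Rightarrow> action set" where
  "restrict_net I A = (\<lambda>(am, ap). (restr I am, restr I ap)) ` A"

definition norm_net :: "nat \<Rightarrow> action set \<Rightarrow> nat" where
  "norm_net d A = Max ({0} \<union> {am i |am ap i. (am, ap) \<in> A \<and> i < d}
                         \<union> {ap i |am ap i. (am, ap) \<in> A \<and> i < d})"

definition states :: "vec set \<Rightarrow> nat set \<Rightarrow> vec set" where
  "states X I = restr I ` X"

definition norm_states :: "nat set \<Rightarrow> vec set \<Rightarrow> nat" where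
  "norm_states I Q = Max ({0} \<union> {q i |q i. q \<in> Q \<and> i \<in> I})"

definition norm_G :: "nat \<Rightarrow> action set \<Rightarrow> vec set \<Rightarrow> nat set \<Rightarrow> nat" where
  "norm_G d A X I = max (norm_states I (states X I)) (norm_net d A)"

text \<open>Edges of G_(X,I) (not needed for properness, included for completeness).\<close>
definition edges :: "action set \<Rightarrow> vec set \<Rightarrow> nat set \<Rightarrow> (vec \<times> action \<times> vec) set" where
  "edges A X I = {(p, a, q). p \<in> states X I \<and> q \<in> states X I \<and> a \<in> A \<and>
                      step {(restr I (fst a), restr I (snd a))} p q}"

definition proper :: "action set \<Rightarrow> vec set \<Rightarrow> nat set \<Rightarrow> bool" where
  "proper A X I \<longleftrightarrow> bottom_scc (configs I) (restrict_net I A) (states X I)"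

definition RB_function :: "(nat \<Rightarrow> nat \<Rightarrow> nat) \<Rightarrow> bool" where
  "RB_function f \<longleftrightarrow> (\<exists>(c::nat) (p::nat poly). \<forall>m d. f m d \<le> (c + m) ^ (2 ^ poly p d))"

end

theory Submission
  imports Defs "HOL-Library.FuncSet"
begin

lemma box_fin_card:
  assumes "finite S"
  shows "finite {y::vec. (\<forall>i. i \<notin> S \<longrightarrow> y i = 0) \<and> (\<forall>i\<in>S. y i \<le> K)} \<and>
         card {y::vec. (\<forall>i. i \<notin> S \<longrightarrow> y i = 0) \<and> (\<forall>i\<in>S. y i \<le> K)} \<le> (K+1) ^ card S"
proof -
  let ?B = "{y::vec. (\<forall>i. i \<notin> S \<longrightarrow> y i = 0) \<and> (\<forall>i\<in>S. y i \<le> K)}"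
  have inj: "inj_on (\<lambda>y. restrict y S) ?B"
  proof (rule inj_onI)
    fix x y assume x: "x \<in> ?B" and y: "y \<in> ?B" and e: "restrict x S = restrict y S"
    show "x = y"
    proof
      fix i show "x i = y i"
        using x y fun_cong[OF e, of i] by (cases "i \<in> S") auto
    qed
  qed
  have sub: "(\<lambda>y. restrict y S) ` ?B \<subseteq> PiE S (\<lambda>_. {..K})" by auto
  have fin: "finite (PiE S (\<lambda>_. {..K}))" using assms by (simp add: finite_PiE)
  have c: "card (PiE S (\<lambda>_. {..K})) = (K+1) ^ card S" using assms by (simp add: card_PiE)
  have "finite ((\<lambda>y. restrict y S) ` ?B)" using finite_subset[OF sub fin] .
  hence f: "finite ?B" using finite_imageD inj by blast
  have "card ?B = card ((\<lambda>y. restrict y S) ` ?B)" using card_image[OF inj] by simp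
  also have "\<dots> \<le> (K+1) ^ card S" using card_mono[OF fin sub] c by simp
  finally show ?thesis using f by simp
qed

lemma step_proj:
  assumes "step A x y"
  shows "step (restrict_net I A) (restr I x) (restr I y)"
proof -
  obtain am ap c where a: "(am, ap) \<in> A" and x: "x = (\<lambda>i. c i + am i)" and y: "y = (\<lambda>i. c i + ap i)"
    using assms unfolding step_def by auto
  have "(restr I am, restr I ap) \<in> restrict_net I A" using a unfolding restrict_net_def by force
  moreover have "restr I x = (\<lambda>i. restr I c i + restr I am i)" "restr I y = (\<lambda>i. restr I c i + restr I ap i)"
    using x y unfolding restr_def by auto
  ultimately show ?thesis unfolding step_def by blast
qed

lemma step_configs:
  assumes "petri_net d A" "step A x y" "x \<in> configs {..<d}"
  shows "y \<in> configs {..<d}"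
proof -
  obtain am ap c where a: "(am, ap) \<in> A" and x: "x = (\<lambda>i. c i + am i)" and y: "y = (\<lambda>i. c i + ap i)"
    using assms(2) unfolding step_def by auto
  have "ap \<in> configs {..<d}" using assms(1) a unfolding petri_net_def by auto
  then show ?thesis using assms(3) x y unfolding configs_def by auto
qed

lemma reach_configs:
  assumes "petri_net d A" "reach A x y" "x \<in> configs {..<d}"
  shows "y \<in> configs {..<d}"
  using assms(2,3) unfolding reach_def
  by (induction rule: rtranclp_induct) (auto intro: step_configs[OF assms(1)])

lemma norm_net_ge:
  assumes "petri_net d A" "(am, ap) \<in> A" "i < d"
  shows "am i \<le> norm_net d A" "ap i \<le> norm_net d A"
proof -
  have fA: "finite A" using assms(1) unfolding petri_net_def by auto
  have f1: "finite {am i |am ap i. (am, ap) \<in> A \<and> i < d}"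
  proof (rule finite_subset[of _ "(\<lambda>((am,ap),i). am i) ` (A \<times> {..<d})"])
    show "{am i |am ap i. (am, ap) \<in> A \<and> i < d} \<subseteq> (\<lambda>((am,ap),i). am i) ` (A \<times> {..<d})"
    proof
      fix v assume "v \<in> {am i |am ap i. (am, ap) \<in> A \<and> i < d}"
      then obtain am ap i where "v = am i" "(am, ap) \<in> A" "i < d" by blast
      then show "v \<in> (\<lambda>((am,ap),i). am i) ` (A \<times> {..<d})" by (intro image_eqI[where x="((am,ap),i)"]) auto
    qed
  qed (simp add: fA)
  have f2: "finite {ap i |am ap i. (am, ap) \<in> A \<and> i < d}"
  proof (rule finite_subset[of _ "(\<lambda>((am,ap),i). ap i) ` (A \<times> {..<d})"])
    show "{ap i |am ap i. (am, ap) \<in> A \<and> i < d} \<subseteq> (\<lambda>((am,ap),i). ap i) ` (A \<times> {..<d})"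
    proof
      fix v assume "v \<in> {ap i |am ap i. (am, ap) \<in> A \<and> i < d}"
      then obtain am ap i where "v = ap i" "(am, ap) \<in> A" "i < d" by blast
      then show "v \<in> (\<lambda>((am,ap),i). ap i) ` (A \<times> {..<d})" by (intro image_eqI[where x="((am,ap),i)"]) auto
    qed
  qed (simp add: fA)
  have fU: "finite ({0} \<union> {am i |am ap i. (am, ap) \<in> A \<and> i < d}
                         \<union> {ap i |am ap i. (am, ap) \<in> A \<and> i < d})" using f1 f2 by simp
  have m1: "am i \<in> {am i |am ap i. (am, ap) \<in> A \<and> i < d}" using assms(2,3) by blast
  have m2: "ap i \<in> {ap i |am ap i. (am, ap) \<in> A \<and> i < d}" using assms(2,3) by blast
  show "am i \<le> norm_net d A" unfolding norm_net_def
    by (rule Max_ge[OF fU]) (use m1 in simp)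
  show "ap i \<le> norm_net d A" unfolding norm_net_def
    by (rule Max_ge[OF fU]) (use m2 in simp)
qed

lemma lift_one:
  assumes pn: "petri_net d A" and st: "step (restrict_net I A) p' p" and r: "restr I x' = p'"
    and big: "\<forall>j. j < d \<longrightarrow> j \<notin> I \<longrightarrow> norm_net d A \<le> x' j"
  shows "\<exists>x''. step A x' x'' \<and> restr I x'' = p \<and> (\<forall>j. j < d \<longrightarrow> j \<notin> I \<longrightarrow> x' j \<le> x'' j + norm_net d A)"
proof -
  obtain am ap c where a: "(am, ap) \<in> A" and p': "p' = (\<lambda>i. c i + restr I am i)"
    and p: "p = (\<lambda>i. c i + restr I ap i)"
    using st unfolding step_def restrict_net_def by auto
  have amc: "am \<in> configs {..<d}" "ap \<in> configs {..<d}" using pn a unfolding petri_net_def by auto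
  have le: "\<And>i. i < d \<Longrightarrow> am i \<le> norm_net d A" using norm_net_ge[OF pn a] by auto
  have ge: "\<And>i. i \<notin> I \<Longrightarrow> am i \<le> x' i"
  proof -
    fix i assume i: "i \<notin> I"
    show "am i \<le> x' i"
    proof (cases "i < d")
      case True then show ?thesis using le[OF True] big i True by (meson le_trans)
    next
      case False then show ?thesis using amc unfolding configs_def by auto
    qed
  qed
  have cI: "\<And>i. i \<notin> I \<Longrightarrow> c i = 0"
  proof -
    fix i assume i: "i \<notin> I"
    have "p' i = 0" using r[symmetric] i by (simp add: restr_def)
    then show "c i = 0" using fun_cong[OF p', of i] by simp
  qed
  define c'' where "c'' = (\<lambda>i. if i \<in> I then c i else x' i - am i)"
  define x'' where "x'' = (\<lambda>i. if i \<in> I then p i else x' i - am i + ap i)"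
  have e1: "x' = (\<lambda>i. c'' i + am i)"
  proof
    fix i show "x' i = c'' i + am i"
    proof (cases "i \<in> I")
      case True then show ?thesis using fun_cong[OF p', of i] fun_cong[OF r, of i]
        unfolding c''_def restr_def by auto
    next
      case False then show ?thesis using ge[OF False] unfolding c''_def by auto
    qed
  qed
  have e2: "x'' = (\<lambda>i. c'' i + ap i)"
    unfolding x''_def c''_def p restr_def by auto
  have "step A x' x''" unfolding step_def using a e1 e2 by blast
  moreover have "restr I x'' = p"
  proof
    fix i show "restr I x'' i = p i"
      using cI[of i] unfolding restr_def x''_def p by auto
  qed
  moreover have "\<forall>j. j < d \<longrightarrow> j \<notin> I \<longrightarrow> x' j \<le> x'' j + norm_net d A"
  proof (intro allI impI)
    fix j assume j: "j < d" "j \<notin> I"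
    have "x'' j = x' j - am j + ap j" using j unfolding x''_def by simp
    then show "x' j \<le> x'' j + norm_net d A" using le[OF j(1)] by linarith
  qed
  ultimately show ?thesis by blast
qed


lemma lift_path:
  assumes pn: "petri_net d A" and R: "R \<subseteq> {(a,b). step (restrict_net I A) a b}"
  shows "(p0,p) \<in> R^^n \<Longrightarrow> restr I x = p0 \<Longrightarrow> \<forall>j. j < d \<longrightarrow> j \<notin> I \<longrightarrow> n * norm_net d A \<le> x j \<Longrightarrow>
    \<exists>x'. reach A x x' \<and> restr I x' = p \<and> (\<forall>j. j < d \<longrightarrow> j \<notin> I \<longrightarrow> x j \<le> x' j + n * norm_net d A)"
proof (induction n arbitrary: p)
  case 0
  then show ?case unfolding reach_def by auto
next
  case (Suc n)
  from Suc.prems(1) obtain p' where p1: "(p0,p') \<in> R^^n" and p2: "(p',p) \<in> R" by auto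
  have "\<forall>j. j < d \<longrightarrow> j \<notin> I \<longrightarrow> n * norm_net d A \<le> x j"
  proof (intro allI impI)
    fix j assume "j < d" "j \<notin> I"
    then have "Suc n * norm_net d A \<le> x j" using Suc.prems(3) by blast
    moreover have "n * norm_net d A \<le> Suc n * norm_net d A" by (intro mult_le_mono1) simp
    ultimately show "n * norm_net d A \<le> x j" by (rule le_trans[rotated])
  qed
  from Suc.IH[OF p1 Suc.prems(2) this] obtain x' where
    x': "reach A x x'" "restr I x' = p'" "\<forall>j. j < d \<longrightarrow> j \<notin> I \<longrightarrow> x j \<le> x' j + n * norm_net d A"
    by blast
  have big: "\<forall>j. j < d \<longrightarrow> j \<notin> I \<longrightarrow> norm_net d A \<le> x' j"
  proof (intro allI impI)
    fix j assume j: "j < d" "j \<notin> I"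
    have "Suc n * norm_net d A \<le> x j" using Suc.prems(3) j by blast
    moreover have "x j \<le> x' j + n * norm_net d A" using x'(3) j by blast
    ultimately show "norm_net d A \<le> x' j" by simp
  qed
  have st: "step (restrict_net I A) p' p" using p2 R by auto
  from lift_one[OF pn st x'(2) big] obtain x'' where
    x'': "step A x' x''" "restr I x'' = p" "\<forall>j. j < d \<longrightarrow> j \<notin> I \<longrightarrow> x' j \<le> x'' j + norm_net d A"
    by blast
  have "reach A x x''" using x'(1) x''(1) unfolding reach_def by auto
  moreover have "\<forall>j. j < d \<longrightarrow> j \<notin> I \<longrightarrow> x j \<le> x'' j + Suc n * norm_net d A"
  proof (intro allI impI)
    fix j assume j: "j < d" "j \<notin> I"
    have "x j \<le> x' j + n * norm_net d A" using x'(3) j by blast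
    moreover have "x' j \<le> x'' j + norm_net d A" using x''(3) j by blast
    ultimately show "x j \<le> x'' j + Suc n * norm_net d A" by simp
  qed
  ultimately show ?case using x''(2) by blast
qed

lemma cons_finite:
  assumes pn: "petri_net d A" and cs: "conservative d A" and bs: "bottom_scc (configs {..<d}) A X"
  shows "finite X"
proof -
  obtain w :: "nat \<Rightarrow> nat" where wp: "\<forall>i<d. w i > 0" and
    we: "\<forall>(am, ap)\<in>A. (\<Sum>i<d. (int (ap i) - int (am i)) * int (w i)) = 0"
    using cs unfolding conservative_def by blast
  define W where "W = (\<lambda>y::vec. \<Sum>i<d. y i * w i)"
  have stW: "W y = W z" if st: "step A y z" for y z
  proof -
    obtain am ap c where a: "(am, ap) \<in> A" and y: "y = (\<lambda>i. c i + am i)" and z: "z = (\<lambda>i. c i + ap i)"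
      using st unfolding step_def by blast
    have "(\<Sum>i<d. (int (ap i) - int (am i)) * int (w i)) = 0" using we a by auto
    then have "(\<Sum>i<d. int (ap i) * int (w i)) = (\<Sum>i<d. int (am i) * int (w i))"
      by (simp add: left_diff_distrib sum_subtractf)
    then have "int (\<Sum>i<d. ap i * w i) = int (\<Sum>i<d. am i * w i)" by simp
    then have e: "(\<Sum>i<d. ap i * w i) = (\<Sum>i<d. am i * w i)" by linarith
    show ?thesis unfolding W_def y z using e by (simp add: add_mult_distrib sum.distrib)
  qed
  have rW: "W y = W z" if "reach A y z" for y z
    using that unfolding reach_def by (induction rule: rtranclp_induct) (auto dest: stW)
  obtain x0 where x0: "x0 \<in> X" using bs unfolding bottom_scc_def by auto
  have "X \<subseteq> {y::vec. (\<forall>i. i \<notin> {..<d} \<longrightarrow> y i = 0) \<and> (\<forall>i\<in>{..<d}. y i \<le> W x0)}"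
  proof
    fix y assume y: "y \<in> X"
    have e: "{y \<in> configs {..<d}. reach A x0 y} = X" using bs x0 unfolding bottom_scc_def by simp
    have "y \<in> {y \<in> configs {..<d}. reach A x0 y}" using e y by simp
    then have yc: "y \<in> configs {..<d}" and r: "reach A x0 y" by simp_all
    have "\<forall>i\<in>{..<d}. y i \<le> W x0"
    proof
      fix i assume i: "i \<in> {..<d}"
      have "1 \<le> w i" using wp i by (simp add: Suc_le_eq)
      then have "y i * 1 \<le> y i * w i" by (intro mult_le_mono2)
      then have "y i \<le> y i * w i" by simp
      also have "\<dots> \<le> W y" unfolding W_def using i
        by (intro member_le_sum) auto
      finally show "y i \<le> W x0" using rW[OF r] by simp
    qed
    then show "y \<in> {y::vec. (\<forall>i. i \<notin> {..<d} \<longrightarrow> y i = 0) \<and> (\<forall>i\<in>{..<d}. y i \<le> W x0)}"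
      using yc unfolding configs_def by auto
  qed
  moreover have "finite {y::vec. (\<forall>i. i \<notin> {..<d} \<longrightarrow> y i = 0) \<and> (\<forall>i\<in>{..<d}. y i \<le> W x0)}"
    using box_fin_card[of "{..<d}" "W x0"] by simp
  ultimately show ?thesis by (rule finite_subset)
qed

lemma reach_proj:
  "reach A x y \<Longrightarrow> reach (restrict_net I A) (restr I x) (restr I y)"
  unfolding reach_def
  by (induction rule: rtranclp_induct) (auto intro: step_proj rtranclp.rtrancl_into_rtrancl)

lemma exit_point:
  "r\<^sup>*\<^sup>* a b \<Longrightarrow> P a \<Longrightarrow> \<not> P b \<Longrightarrow> \<exists>p z. r\<^sup>*\<^sup>* a p \<and> P p \<and> r p z \<and> \<not> P z"
proof (induction rule: rtranclp_induct)
  case base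
  then show ?case by blast
next
  case (step b' b)
  show ?case
  proof (cases "P b'")
    case True then show ?thesis using step by blast
  next
    case False then show ?thesis using step by blast
  qed
qed

lemma arith_bound:
  fixes n N M m d :: nat
  assumes "n \<le> (M+1)^(2*d)" "M \<le> m" "N \<le> m"
  shows "(n+1) * N \<le> (m+2)^(2*d+2)"
proof -
  have a: "(M+1)^(2*d) \<le> (m+2)^(2*d)" using assms(2) by (intro power_mono) auto
  have b: "1 \<le> (m+2)^(2*d)" by simp
  have "n + 1 \<le> (m+2)^(2*d) * 2" using assms(1) a b by linarith
  also have "\<dots> \<le> (m+2)^(2*d) * (m+2)" by (intro mult_le_mono2) auto
  finally have c: "n + 1 \<le> (m+2)^(2*d+1)" by (simp add: mult.commute)
  have f: "(n+1) * N \<le> (m+2)^(2*d+1) * (m+2)" using c assms(3) by (intro mult_le_mono) auto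
  have e: "(m+2)^(2*d+1) * (m+2) = (m+2)^(2*d+2)"
    by (simp add: power_add power2_eq_square mult.assoc)
  show ?thesis using f e by (rule ord_le_eq_trans)
qed


lemma rb_F: "RB_function (\<lambda>m d. (m+2)^(2*d+2))"
  unfolding RB_function_def
proof (intro exI allI)
  fix m d :: nat
  have p: "poly [:2,2:] d = 2*d+2" by simp
  have "2*d+2 \<le> 2^(2*d+2)" using less_exp[of "2*d+2"] by linarith
  then have "(m+2)^(2*d+2) \<le> (m+2)^(2^(2*d+2))"
    by (rule power_increasing) simp
  then have "(m+2)^(2*d+2) \<le> (2+m)^(2^(2*d+2))" by (metis add.commute)
  then show "(m+2)^(2*d+2) \<le> (2+m)^(2^(poly [:2,2:] d))" unfolding p .
qed

lemma main_proper:
  assumes pn: "petri_net d A" and cs: "conservative d A" and bs: "bottom_scc (configs {..<d}) A X"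
    and IS: "I \<subseteq> {..<d}"
    and x0X: "x0 \<in> X" and x0b: "\<forall>j\<in>{..<d} - I. (norm_G d A X I + 2)^(2*d+2) \<le> x0 j"
  shows "proper A X I"
proof -
  let ?B = "restrict_net I A"
  let ?Q = "states X I"
  define M where "M = norm_states I ?Q"
  define N where "N = norm_net d A"
  define m where "m = norm_G d A X I"
  have mM: "M \<le> m" and mN: "N \<le> m" unfolding m_def M_def N_def norm_G_def by auto
  have XC: "X \<subseteq> configs {..<d}" using bs unfolding bottom_scc_def by blast
  have fX: "finite X" by (rule cons_finite[OF pn cs bs])
  have fQ: "finite ?Q" unfolding states_def using fX by simp
  have XE: "X \<noteq> {}" using bs unfolding bottom_scc_def by blast
  have inX: "y \<in> X" if "x \<in> X" "reach A x y" for x y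
  proof -
    have e: "{y \<in> configs {..<d}. reach A x y} = X" using bs that(1) unfolding bottom_scc_def by simp
    have "y \<in> configs {..<d}" using reach_configs[OF pn that(2)] XC that(1) by blast
    then show ?thesis using e that(2) by blast
  qed
  have allr: "reach A x y" if "x \<in> X" "y \<in> X" for x y
  proof -
    have e: "{y \<in> configs {..<d}. reach A x y} = X" using bs that(1) unfolding bottom_scc_def by simp
    show ?thesis using e that(2) by blast
  qed
  have fS: "finite {q i |q i. q \<in> ?Q \<and> i \<in> I}"
  proof -
    have fI: "finite I" using IS finite_subset by blast
    have "{q i |q i. q \<in> ?Q \<and> i \<in> I} \<subseteq> (\<lambda>(q,i). q i) ` (?Q \<times> I)" by force
    then show ?thesis using fQ fI finite_subset by blast
  qed
  have Qbox: "?Q \<subseteq> {y::vec. (\<forall>i. i \<notin> I \<longrightarrow> y i = 0) \<and> (\<forall>i\<in>I. y i \<le> M)}"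
  proof
    fix q assume q: "q \<in> ?Q"
    have "\<forall>i\<in>I. q i \<le> M"
    proof
      fix i assume i: "i \<in> I"
      have "q i \<in> {0} \<union> {q i |q i. q \<in> ?Q \<and> i \<in> I}" using q i by blast
      then show "q i \<le> M" unfolding M_def norm_states_def by (intro Max_ge) (use fS in auto)
    qed
    moreover have "\<forall>i. i \<notin> I \<longrightarrow> q i = 0" using q unfolding states_def restr_def by auto
    ultimately show "q \<in> {y::vec. (\<forall>i. i \<notin> I \<longrightarrow> y i = 0) \<and> (\<forall>i\<in>I. y i \<le> M)}" by blast
  qed
  have fI: "finite I" using IS finite_subset by blast
  have cQ: "card ?Q \<le> (M+1)^d"
  proof -
    have "card ?Q \<le> card {y::vec. (\<forall>i. i \<notin> I \<longrightarrow> y i = 0) \<and> (\<forall>i\<in>I. y i \<le> M)}"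
      using box_fin_card[OF fI, of M] Qbox by (intro card_mono) auto
    also have "\<dots> \<le> (M+1)^card I" using box_fin_card[OF fI, of M] by simp
    also have "\<dots> \<le> (M+1)^d"
    proof -
      have "card I \<le> card {..<d}" using IS by (intro card_mono) auto
      then show ?thesis by (intro power_increasing) auto
    qed
    finally show ?thesis .
  qed
  define R where "R = {(a,b). step ?B a b \<and> a \<in> ?Q \<and> b \<in> ?Q}"
  have RQ: "R \<subseteq> ?Q \<times> ?Q" unfolding R_def by auto
  have fR: "finite R" using RQ fQ finite_subset by blast
  have cR: "card R \<le> (M+1)^(2*d)"
  proof -
    have "card R \<le> card (?Q \<times> ?Q)" using RQ fQ by (intro card_mono) auto
    also have "\<dots> = card ?Q * card ?Q" by (simp add: card_cartesian_product)
    also have "\<dots> \<le> (M+1)^d * (M+1)^d" using cQ by (intro mult_le_mono) auto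
    also have "\<dots> = (M+1)^(2*d)" by (simp add: power_add[symmetric] mult_2)
    finally show ?thesis .
  qed
  define q0 where "q0 = restr I x0"
  have pathR: "(q0, restr I x) \<in> R\<^sup>*" if "reach A x0 x" for x
    using that unfolding reach_def
  proof (induction rule: rtranclp_induct)
    case base
    then show ?case unfolding q0_def by simp
  next
    case (step y z)
    have yX: "y \<in> X" using inX[OF x0X] step(1) unfolding reach_def by blast
    have zX: "z \<in> X" using inX[OF x0X] step(1,2) unfolding reach_def
      by (meson rtranclp.rtrancl_into_rtrancl)
    have "(restr I y, restr I z) \<in> R" unfolding R_def states_def
      using yX zX step_proj[OF step(2)] by blast
    then show ?case using step(3) by (rule rtrancl_into_rtrancl[rotated])
  qed
  show ?thesis
    unfolding proper_def bottom_scc_def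
  proof (intro conjI ballI)
    show "?Q \<noteq> {}" using XE unfolding states_def by simp
    show "?Q \<subseteq> configs I" unfolding states_def configs_def restr_def by auto
    fix q assume q: "q \<in> ?Q"
    then obtain xq where xq: "xq \<in> X" "q = restr I xq" unfolding states_def by blast
    show "{y \<in> configs I. reach ?B q y} = ?Q"
    proof
      show "?Q \<subseteq> {y \<in> configs I. reach ?B q y}"
      proof
        fix y assume "y \<in> ?Q"
        then obtain xy where xy: "xy \<in> X" "y = restr I xy" unfolding states_def by blast
        have "reach ?B q y" using reach_proj[OF allr[OF xq(1) xy(1)]] xq xy by simp
        moreover have "y \<in> configs I" using xy unfolding configs_def restr_def by auto
        ultimately show "y \<in> {y \<in> configs I. reach ?B q y}" by blast
      qed
    next
      show "{y \<in> configs I. reach ?B q y} \<subseteq> ?Q"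
      proof
        fix y assume y: "y \<in> {y \<in> configs I. reach ?B q y}"
        show "y \<in> ?Q"
        proof (rule ccontr)
          assume ny: "y \<notin> ?Q"
          have "reach ?B q0 q" using reach_proj[OF allr[OF x0X xq(1)]] xq unfolding q0_def by simp
          then have "reach ?B q0 y" using y unfolding reach_def by auto
          moreover have "q0 \<in> ?Q" unfolding q0_def states_def using x0X by blast
          ultimately obtain p z where pz: "reach ?B q0 p" "p \<in> ?Q" "step ?B p z" "z \<notin> ?Q"
            using exit_point[of "step ?B" q0 y "\<lambda>v. v \<in> ?Q"] ny unfolding reach_def by blast
          obtain xp where xp: "xp \<in> X" "p = restr I xp" using pz(2) unfolding states_def by blast
          have "(q0, p) \<in> R\<^sup>*" using pathR[OF allr[OF x0X xp(1)]] xp by simp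
          then obtain n where n: "n \<le> card R" "(q0, p) \<in> R^^n"
            using rtrancl_finite_eq_relpow[OF fR] by blast
          have nb: "(n+1) * N \<le> (m+2)^(2*d+2)"
            using arith_bound[of n M d m N] n(1) cR mM mN by simp
          have big0: "\<forall>j. j < d \<longrightarrow> j \<notin> I \<longrightarrow> n * N \<le> x0 j"
          proof (intro allI impI)
            fix j assume j: "j < d" "j \<notin> I"
            have "(m+2)^(2*d+2) \<le> x0 j" using x0b j unfolding m_def by blast
            moreover have "n * N \<le> (n+1) * N" by simp
            ultimately show "n * N \<le> x0 j" using nb by linarith
          qed
          have Rs: "R \<subseteq> {(a,b). step ?B a b}" unfolding R_def by auto
          from lift_path[OF pn Rs n(2) _ big0[unfolded N_def]] obtain x' where
            x': "reach A x0 x'" "restr I x' = p" "\<forall>j. j < d \<longrightarrow> j \<notin> I \<longrightarrow> x0 j \<le> x' j + n * N"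
            unfolding q0_def N_def by blast
          have big': "\<forall>j. j < d \<longrightarrow> j \<notin> I \<longrightarrow> norm_net d A \<le> x' j"
          proof (intro allI impI)
            fix j assume j: "j < d" "j \<notin> I"
            have "(m+2)^(2*d+2) \<le> x0 j" using x0b j unfolding m_def by blast
            then have "(n+1) * N \<le> x0 j" using nb by linarith
            moreover have "x0 j \<le> x' j + n * N" using x'(3) j by blast
            ultimately show "norm_net d A \<le> x' j" unfolding N_def by simp
          qed
          from lift_one[OF pn pz(3) x'(2) big'] obtain x'' where
            x'': "step A x' x''" "restr I x'' = z" by blast
          have "reach A x0 x''" using x'(1) x''(1) unfolding reach_def by auto
          then have "x'' \<in> X" using inX[OF x0X] by blast
          then have "z \<in> ?Q" using x''(2) unfolding states_def by blast
          then show False using pz(4) by blast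
        qed
      qed
    qed
  qed
qed

theorem proposition11:
  shows "\<exists>f_scc. RB_function f_scc \<and>
    (\<forall>d A X I. petri_net d A \<longrightarrow> conservative d A \<longrightarrow> bottom_scc (configs {..<d}) A X \<longrightarrow>
       I \<subseteq> {..<d} \<longrightarrow>
       (\<exists>x\<in>X. \<forall>j\<in>{..<d} - I. f_scc (norm_G d A X I) d \<le> x j) \<longrightarrow>
       proper A X I)"
proof (intro exI conjI allI impI)
  show "RB_function (\<lambda>m d. (m+2)^(2*d+2))" by (rule rb_F)
  fix d A X I
  assume pn: "petri_net d A" and cs: "conservative d A" and bs: "bottom_scc (configs {..<d}) A X"
    and IS: "I \<subseteq> {..<d}"
    and ex: "\<exists>x\<in>X. \<forall>j\<in>{..<d} - I. (\<lambda>m d. (m+2)^(2*d+2)) (norm_G d A X I) d \<le> x j"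
  then obtain x0 where "x0 \<in> X" "\<forall>j\<in>{..<d} - I. (norm_G d A X I + 2)^(2*d+2) \<le> x0 j" by auto
  then show "proper A X I" using main_proper[OF pn cs bs IS] by blast
qed

end
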